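(* Let $n\ge2$. Every sublinear generalized frame function $f:\mathbb{C}^n\to\mathbb{R}$ is identically zero.
   Context: $\mathbb{C}^n$ carries a Hermitian inner product. A generalized frame function is $f:\mathbb{C}^n\to\mathbb{R}$ with $f(0)=0$ and $f(u+v)=f(u)+f(v)$ for every pair of orthogonal vectors $u,v\in\mathbb{C}^n\setminus\{0\}$. $f$ is sublinear if $f(v)/\|v\|\to0$ as $\|v\|\to\infty$. *)

theory Defs
  imports "HOL-Analysis.Analysis"
begin

text \<open>Standard Hermitian inner product on complex^'n (linear in the first argument).
  Its induced norm coincides with the library norm on complex^'n.\<close>
definition herm_inner :: "complex ^ 'n \<Rightarrow> complex ^ 'n \<Rightarrow> complex" where
  "herm_inner u v = (\<Sum>i\<in>UNIV. u $ i * cnj (v $ i))"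

definition herm_orth :: "complex ^ 'n \<Rightarrow> complex ^ 'n \<Rightarrow> bool" where
  "herm_orth u v \<longleftrightarrow> herm_inner u v = 0"

definition gen_frame_function :: "(complex ^ 'n \<Rightarrow> real) \<Rightarrow> bool" where
  "gen_frame_function f \<longleftrightarrow> f 0 = 0 \<and>
     (\<forall>u v. u \<noteq> 0 \<longrightarrow> v \<noteq> 0 \<longrightarrow> herm_orth u v \<longrightarrow> f (u + v) = f u + f v)"

definition sublinear :: "(complex ^ 'n \<Rightarrow> real) \<Rightarrow> bool" where
  "sublinear f \<longleftrightarrow> ((\<lambda>v. f v / norm v) \<longlongrightarrow> 0) at_infinity"

end

theory Submission
  imports Defs
begin

lemma herm_add_left: "herm_inner (a + b) c = herm_inner a c + herm_inner b c"
  by (simp add: herm_inner_def distrib_right sum.distrib)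

lemma herm_minus_left: "herm_inner (- a) c = - herm_inner a c"
  by (simp add: herm_inner_def sum_negf)

lemma herm_minus_right: "herm_inner a (- c) = - herm_inner a c"
  by (simp add: herm_inner_def sum_negf)

lemma herm_diff_left: "herm_inner (a - b) c = herm_inner a c - herm_inner b c"
  by (simp add: herm_inner_def left_diff_distrib sum_subtractf)

lemma herm_add_right: "herm_inner c (a + b) = herm_inner c a + herm_inner c b"
  by (simp add: herm_inner_def distrib_left sum.distrib)

lemma herm_diff_right: "herm_inner c (a - b) = herm_inner c a - herm_inner c b"
  by (simp add: herm_inner_def right_diff_distrib sum_subtractf)

lemma herm_scale_left: "herm_inner (r *\<^sub>R a) c = of_real r * herm_inner a c"
  unfolding herm_inner_def vector_scaleR_component by (simp add: scaleR_conv_of_real sum_distrib_left mult_ac)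

lemma herm_scale_right: "herm_inner a (r *\<^sub>R c) = of_real r * herm_inner a c"
  unfolding herm_inner_def vector_scaleR_component by (simp add: scaleR_conv_of_real sum_distrib_left mult_ac)

lemma herm_sym: "herm_inner b a = cnj (herm_inner a b)"
  by (simp add: herm_inner_def mult.commute)

lemma herm_self: "herm_inner u u = of_real (\<Sum>k\<in>UNIV. (cmod (u$k))^2)"
  unfolding herm_inner_def of_real_sum by (rule sum.cong) (simp_all add: complex_norm_square[symmetric] del: of_real_power)

lemma herm_self_zero: "herm_inner u u = 0 \<Longrightarrow> u = 0"
proof -
  assume "herm_inner u u = 0"
  hence "complex_of_real (\<Sum>k\<in>UNIV. (cmod (u$k))^2) = 0" by (simp only: herm_self)
  hence "(\<Sum>k\<in>UNIV. (cmod (u$k))^2) = 0" by (simp only: of_real_eq_0_iff)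
  hence "\<forall>k\<in>UNIV. (cmod (u$k))^2 = 0"
    by (subst sum_nonneg_eq_0_iff[symmetric]) auto
  thus "u = 0" by (simp add: vec_eq_iff)
qed

lemma exists_partner:
  fixes u :: "complex ^ 'n"
  assumes "CARD('n) \<ge> 2" "u \<noteq> 0"
  shows "\<exists>v. v \<noteq> 0 \<and> herm_orth u v \<and> herm_inner u u = herm_inner v v"
proof -
  obtain i where i: "u$i \<noteq> 0" using assms(2) by (auto simp: vec_eq_iff)
  have "UNIV - {i} \<noteq> {}"
  proof
    assume "UNIV - {i} = {}"
    hence "UNIV = {i}" by auto
    hence "CARD('n) = 1" by (metis card.empty card_insert_disjoint empty_iff finite.emptyI One_nat_def)
    thus False using assms(1) by simp
  qed
  then obtain j where j: "j \<noteq> i" by auto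
  define w :: "complex ^ 'n" where "w = (\<chi> k. if k = i then cnj (u$j) else if k = j then - cnj (u$i) else 0)"
  have wj: "w $ j \<noteq> 0" using i j by (simp add: w_def)
  hence w0: "w \<noteq> 0" by auto
  have "\<And>k. u$k * cnj (w$k) = (if k = i then u$i * u$j else 0) + (if k = j then - (u$j * u$i) else 0)"
    using j by (auto simp: w_def)
  hence orth: "herm_inner u w = 0"
    by (simp add: herm_inner_def sum.distrib mult.commute)
  define a where "a = (\<Sum>k\<in>UNIV. (cmod (u$k))^2)"
  define b where "b = (\<Sum>k\<in>UNIV. (cmod (w$k))^2)"
  have a: "herm_inner u u = of_real a" by (simp add: a_def herm_self)
  have b: "herm_inner w w = of_real b" by (simp add: b_def herm_self)
  have "b \<ge> 0" unfolding b_def by (simp add: sum_nonneg)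
  moreover have "b \<noteq> 0" using b w0 herm_self_zero by fastforce
  ultimately have bp: "b > 0" by simp
  have "a \<ge> 0" unfolding a_def by (simp add: sum_nonneg)
  define c where "c = sqrt (a / b)"
  have c2: "c * c * b = a" using bp \<open>a \<ge> 0\<close> by (simp add: c_def)
  have "c \<noteq> 0"
  proof
    assume "c = 0" hence "a = 0" using c2 by simp
    hence "herm_inner u u = 0" using a by simp
    thus False using assms(2) herm_self_zero by blast
  qed
  show ?thesis
  proof (intro exI conjI)
    show "c *\<^sub>R w \<noteq> 0" using \<open>c \<noteq> 0\<close> w0 by simp
    show "herm_orth u (c *\<^sub>R w)" by (simp add: herm_orth_def herm_scale_right orth)
    have "herm_inner (c *\<^sub>R w) (c *\<^sub>R w) = of_real (c * c * b)"
      by (simp add: herm_scale_left herm_scale_right b)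
    thus "herm_inner u u = herm_inner (c *\<^sub>R w) (c *\<^sub>R w)" using c2 a by simp
  qed
qed

lemma pair_step:
  fixes f :: "complex ^ 'n \<Rightarrow> real"
  assumes ff: "gen_frame_function f" and u: "u \<noteq> 0" and v: "v \<noteq> 0"
    and o: "herm_orth u v" and n: "herm_inner u u = herm_inner v v"
  shows "f (2 *\<^sub>R u) = 2 * f u + f v + f (- v)"
proof -
  have add: "\<And>x y. x \<noteq> 0 \<Longrightarrow> y \<noteq> 0 \<Longrightarrow> herm_orth x y \<Longrightarrow> f (x + y) = f x + f y"
    using ff by (simp add: gen_frame_function_def)
  have ouv: "herm_inner u v = 0" using o by (simp add: herm_orth_def)
  have ovu: "herm_inner v u = 0" using ouv by (simp add: herm_sym[of v u])
  have "u + v \<noteq> 0"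
  proof
    assume "u + v = 0" hence "v = - u" by (simp add: add_eq_0_iff)
    hence "herm_inner u u = 0" using ouv by (simp add: herm_minus_right)
    thus False using u herm_self_zero by blast
  qed
  moreover have "u - v \<noteq> 0"
  proof
    assume "u - v = 0" hence "v = u" by simp
    hence "herm_inner u u = 0" using ouv by simp
    thus False using u herm_self_zero by blast
  qed
  moreover have "herm_orth (u + v) (u - v)"
    using ouv ovu n by (simp add: herm_orth_def herm_add_left herm_diff_right)
  moreover have "(u + v) + (u - v) = 2 *\<^sub>R u" by (simp add: scaleR_2)
  ultimately have "f (2 *\<^sub>R u) = f (u + v) + f (u - v)" using add by metis
  also have "f (u + v) = f u + f v" using add u v o by blast
  also have "f (u - v) = f u + f (- v)"
    using add[of u "- v"] u v ouv by (simp add: herm_orth_def herm_minus_right)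
  finally show ?thesis by simp
qed

lemma orth_sym: "herm_orth u v \<Longrightarrow> herm_orth v u"
  by (simp add: herm_orth_def herm_sym[of v u])

lemma S_D_step:
  fixes f :: "complex ^ 'n \<Rightarrow> real"
  assumes card: "CARD('n) \<ge> 2" and ff: "gen_frame_function f" and u: "u \<noteq> 0"
  shows "f (2 *\<^sub>R u) + f (- (2 *\<^sub>R u)) = 4 * (f u + f (- u))
       \<and> f (2 *\<^sub>R u) - f (- (2 *\<^sub>R u)) = 2 * (f u - f (- u))"
proof -
  have gen: "\<And>x y. x \<noteq> 0 \<Longrightarrow> y \<noteq> 0 \<Longrightarrow> herm_orth x y \<Longrightarrow> herm_inner x x = herm_inner y y \<Longrightarrow>
      f (2 *\<^sub>R x) + f (- (2 *\<^sub>R x)) = 2 * (f x + f (- x)) + 2 * (f y + f (- y))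
    \<and> f (2 *\<^sub>R x) - f (- (2 *\<^sub>R x)) = 2 * (f x - f (- x))"
  proof -
    fix x y :: "complex ^ 'n"
    assume x: "x \<noteq> 0" and y: "y \<noteq> 0" and o: "herm_orth x y" and n: "herm_inner x x = herm_inner y y"
    have o': "herm_orth (- x) y" using o by (simp add: herm_orth_def herm_minus_left)
    have n': "herm_inner (- x) (- x) = herm_inner y y" using n by (simp add: herm_minus_left herm_minus_right)
    have 1: "f (2 *\<^sub>R x) = 2 * f x + f y + f (- y)" using pair_step[OF ff x y o n] .
    have 2: "f (2 *\<^sub>R (- x)) = 2 * f (- x) + f y + f (- y)"
      using pair_step[OF ff _ y o' n'] x by simp
    show "?thesis x y" using 1 2 by simp
  qed
  obtain v where v: "v \<noteq> 0" "herm_orth u v" "herm_inner u u = herm_inner v v"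
    using exists_partner[OF card u] by blast
  have hu: "(1/2) *\<^sub>R u \<noteq> 0" using u by simp
  have hv: "(1/2) *\<^sub>R v \<noteq> 0" using v by simp
  have ho: "herm_orth ((1/2) *\<^sub>R u) ((1/2) *\<^sub>R v)"
    using v(2) by (simp add: herm_orth_def herm_scale_left herm_scale_right)
  have hn: "herm_inner ((1/2) *\<^sub>R u) ((1/2) *\<^sub>R u) = herm_inner ((1/2) *\<^sub>R v) ((1/2) *\<^sub>R v)"
    using v(3) by (simp add: herm_scale_left herm_scale_right)
  have A: "f u + f (- u) = 2 * (f ((1/2) *\<^sub>R u) + f (- ((1/2) *\<^sub>R u))) + 2 * (f ((1/2) *\<^sub>R v) + f (- ((1/2) *\<^sub>R v)))"
    using conjunct1[OF gen[OF hu hv ho hn]] by simp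
  have B: "f v + f (- v) = 2 * (f ((1/2) *\<^sub>R v) + f (- ((1/2) *\<^sub>R v))) + 2 * (f ((1/2) *\<^sub>R u) + f (- ((1/2) *\<^sub>R u)))"
    using conjunct1[OF gen[OF hv hu orth_sym[OF ho] hn[symmetric]]] by simp
  have "f u + f (- u) = f v + f (- v)" using A B by simp
  thus ?thesis using gen[OF u v(1) v(2) v(3)] by simp
qed

lemma pow_step:
  fixes f :: "complex ^ 'n \<Rightarrow> real"
  assumes card: "CARD('n) \<ge> 2" and ff: "gen_frame_function f" and u: "u \<noteq> 0"
  shows "f ((2^k) *\<^sub>R u) + f (- ((2^k) *\<^sub>R u)) = 4^k * (f u + f (- u))
       \<and> f ((2^k) *\<^sub>R u) - f (- ((2^k) *\<^sub>R u)) = 2^k * (f u - f (- u))"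
proof (induction k)
  case 0 then show ?case by simp
next
  case (Suc k)
  have nz: "(2^k) *\<^sub>R u \<noteq> 0" using u by simp
  have e: "(2::real)^(Suc k) *\<^sub>R u = 2 *\<^sub>R ((2^k) *\<^sub>R u)" by simp
  show ?case using S_D_step[OF card ff nz] Suc.IH unfolding e by simp
qed

lemma eps_zero: "(\<And>e. e > 0 \<Longrightarrow> \<bar>a\<bar> \<le> e * c) \<Longrightarrow> c \<ge> 0 \<Longrightarrow> (a::real) = 0"
proof (rule ccontr)
  assume h: "\<And>e. e > 0 \<Longrightarrow> \<bar>a\<bar> \<le> e * c" and c: "c \<ge> 0" and a: "a \<noteq> 0"
  have "\<bar>a\<bar> \<le> (\<bar>a\<bar> / (2 * (c + 1))) * c" using h[of "\<bar>a\<bar> / (2 * (c + 1))"] a c by simp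
  moreover have "(\<bar>a\<bar> / (2 * (c + 1))) * c < \<bar>a\<bar>"
    using a c by (simp add: field_simps add_nonneg_pos)
  ultimately show False by simp
qed

theorem mainTheorem20:
  fixes f :: "complex ^ 'n \<Rightarrow> real"
  assumes "CARD('n) \<ge> 2"
    and "gen_frame_function f"
    and "sublinear f"
  shows "\<forall>v. f v = 0"
proof
  fix u :: "complex ^ 'n"
  show "f u = 0"
  proof (cases "u = 0")
    case True thus ?thesis using assms(2) by (simp add: gen_frame_function_def)
  next
    case False
    have bound: "\<exists>R. \<forall>x. R \<le> norm x \<longrightarrow> \<bar>f x\<bar> \<le> e * norm x" if e: "e > 0" for e
    proof -
      have "\<forall>\<^sub>F x in at_infinity. dist (f x / norm x) 0 < e"
        using assms(3) e unfolding sublinear_def tendsto_iff by blast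
      then obtain R where R: "\<And>x. R \<le> norm x \<Longrightarrow> \<bar>f x / norm x\<bar> < e"
        unfolding eventually_at_infinity by auto
      show ?thesis
      proof (intro exI allI impI)
        fix x :: "complex ^ 'n" assume "max R 1 \<le> norm x"
        hence np: "norm x > 0" and "R \<le> norm x" by auto
        hence "\<bar>f x\<bar> / norm x < e" using R by (simp add: abs_div)
        thus "\<bar>f x\<bar> \<le> e * norm x" using np by (simp add: divide_less_eq)
      qed
    qed
    have un: "norm u > 0" using False by simp
    have key: "\<bar>f u + f (- u)\<bar> \<le> e * (2 * norm u) \<and> \<bar>f u - f (- u)\<bar> \<le> e * (2 * norm u)" if e: "e > 0" for e
    proof -
      obtain R where R: "\<And>x. R \<le> norm x \<Longrightarrow> \<bar>f x\<bar> \<le> e * norm x" using bound[OF e] by blast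
      obtain k where k: "R / norm u < 2^k" using real_arch_pow[of 2 "R / norm u"] by auto
      define x where "x = (2::real)^k *\<^sub>R u"
      have nx: "norm x = 2^k * norm u" by (simp add: x_def)
      have "R \<le> norm x" using k un by (simp add: nx divide_less_eq)
      hence b1: "\<bar>f x\<bar> \<le> e * norm x" and b2: "\<bar>f (- x)\<bar> \<le> e * norm x" using R[of x] R[of "- x"] by auto
      have P: "f x + f (- x) = 4^k * (f u + f (- u))" and M: "f x - f (- x) = 2^k * (f u - f (- u))"
        using pow_step[OF assms(1,2) False, of k] unfolding x_def by auto
      have "\<bar>4^k * (f u + f (- u))\<bar> \<le> 2 * e * norm x" using P b1 b2 by linarith
      hence s1: "4^k * \<bar>f u + f (- u)\<bar> \<le> 2^k * (2 * e * norm u)" by (simp add: abs_mult nx mult_ac)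
      have "(4::real)^k = 2^k * 2^k" by (simp add: power_mult_distrib[symmetric])
      hence "2^k * (2^k * \<bar>f u + f (- u)\<bar>) \<le> 2^k * (2 * e * norm u)" using s1 by (simp add: mult.assoc)
      hence "2^k * \<bar>f u + f (- u)\<bar> \<le> 2 * e * norm u" by simp
      moreover have "\<bar>f u + f (- u)\<bar> \<le> 2^k * \<bar>f u + f (- u)\<bar>"
        by (simp add: mult_le_cancel_right1)
      ultimately have c1: "\<bar>f u + f (- u)\<bar> \<le> e * (2 * norm u)" by simp
      have "\<bar>2^k * (f u - f (- u))\<bar> \<le> 2 * e * norm x" using M b1 b2 by linarith
      hence "2^k * \<bar>f u - f (- u)\<bar> \<le> 2^k * (2 * e * norm u)" by (simp add: abs_mult nx)
      hence c2: "\<bar>f u - f (- u)\<bar> \<le> e * (2 * norm u)" by simp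
      show ?thesis using c1 c2 by simp
    qed
    have "f u + f (- u) = 0" using eps_zero[of "f u + f (- u)" "2 * norm u"] key un by auto
    moreover have "f u - f (- u) = 0" using eps_zero[of "f u - f (- u)" "2 * norm u"] key un by auto
    ultimately show ?thesis by simp
  qed
qed

end
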